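(* Let $G$ be a multiplicatively written Abelian group with identity $e$, let $\phi$ be a height on $G$, fix $\alpha\in G$, and let $t\in(0,\infty]$. The following three conditions are equivalent: (i) The infimum in the definition of $\phi_t(\alpha)$ is attained, i.e. there exists $(\alpha_1,\alpha_2,\ldots)\in G^\infty$ with $\tau_G(\alpha_1,\alpha_2,\ldots)=\alpha$ and $\phi_t(\alpha)=\|(\phi(\alpha_1),\phi(\alpha_2),\ldots)\|_t$. (ii) There exists a finite set $R\subseteq G$ (containing $e$) that replaces $G$ at $t$. (iii) There exists a set $S\subseteq G$ (containing $e$) with $\phi(S)$ finite that replaces $G$ at $t$.
   Context: A height on an Abelian group $G$ is a map $\phi:G\to[0,\infty)$ with $\phi(e)=0$ and $\phi(\beta)=\phi(\beta^{-1})$ for all $\beta\in G$. For a subset $S\subseteq G$ containing $e$, $S^\infty$ denotes the set of sequences $(\alpha_1,\alpha_2,\ldots)$ with all $\alpha_n\in S$ and $\alpha_n=e$ for all but finitely many $n$. The map $\tau_G:G^\infty\to G$ is $\tau_G(\alpha_1,\alpha_2,\ldots)=\prod_{n\ge1}\alpha_n$. $\mathbb R^\infty$ denotes the set of real sequences with only finitely many nonzero entries; for $\mathbf x=(x_1,x_2,\ldots)\in\mathbb R^\infty$, $\|\mathbf x\|_t=(\sum_n|x_n|^t)^{1/t}$ for $t\in(0,\infty)$ and $\|\mathbf x\|_\infty=\max_n|x_n|$. The $t$-metric version of $\phi$ is $\phi_t(\alpha)=\inf\{\|(\phi(\alpha_1),\phi(\alpha_2),\ldots)\|_t : (\alpha_1,\alpha_2,\ldots)\in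 G^\infty,\ \tau_G(\alpha_1,\alpha_2,\ldots)=\alpha\}$. A set $S\subseteq G$ containing $e$ replaces $G$ at $t$ (for the fixed $\alpha$) if $\phi_t(\alpha)=\inf\{\|(\phi(\alpha_1),\phi(\alpha_2),\ldots)\|_t:(\alpha_1,\alpha_2,\ldots)\in S^\infty,\ \tau_G(\alpha_1,\alpha_2,\ldots)=\alpha\}$. *)

theory Defs
  imports "HOL-Analysis.Analysis"
begin

text \<open>The Abelian group G is written additively as a type of class ab_group_add
  (identity 0, inverse uminus, product = sum). Sequences are indexed by nat.\<close>

definition height :: "('a::ab_group_add \<Rightarrow> real) \<Rightarrow> bool" where
  "height \<phi> \<longleftrightarrow> (\<forall>x. \<phi> x \<ge> 0) \<and> \<phi> 0 = 0 \<and> (\<forall>x. \<phi> (- x) = \<phi> x)"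

definition fin_seqs :: "'a::ab_group_add set \<Rightarrow> (nat \<Rightarrow> 'a) set" where
  "fin_seqs S = {a. (\<forall>n. a n \<in> S) \<and> finite {n. a n \<noteq> 0}}"

definition tau :: "(nat \<Rightarrow> 'a::ab_group_add) \<Rightarrow> 'a" where
  "tau a = (\<Sum>n\<in>{n. a n \<noteq> 0}. a n)"

definition tnorm :: "ereal \<Rightarrow> (nat \<Rightarrow> real) \<Rightarrow> real" where
  "tnorm t x = (if t = \<infinity> then Sup (range (\<lambda>n. \<bar>x n\<bar>))
     else (\<Sum>n\<in>{n. x n \<noteq> 0}. \<bar>x n\<bar> powr real_of_ereal t) powr (1 / real_of_ereal t))"

text \<open>Infimum of t-norms over representations of alpha by elements of S
  (taken in the extended reals, so that the infimum of the empty set is infinity).\<close>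
definition inf_rep :: "('a::ab_group_add \<Rightarrow> real) \<Rightarrow> ereal \<Rightarrow> 'a set \<Rightarrow> 'a \<Rightarrow> ereal" where
  "inf_rep \<phi> t S \<alpha> = Inf {ereal (tnorm t (\<phi> \<circ> a)) | a. a \<in> fin_seqs S \<and> tau a = \<alpha>}"

definition phi_t :: "('a::ab_group_add \<Rightarrow> real) \<Rightarrow> ereal \<Rightarrow> 'a \<Rightarrow> ereal" where
  "phi_t \<phi> t \<alpha> = inf_rep \<phi> t UNIV \<alpha>"

definition replaces :: "('a::ab_group_add \<Rightarrow> real) \<Rightarrow> ereal \<Rightarrow> 'a \<Rightarrow> 'a set \<Rightarrow> bool" where
  "replaces \<phi> t \<alpha> S \<longleftrightarrow> 0 \<in> S \<and> phi_t \<phi> t \<alpha> = inf_rep \<phi> t S \<alpha>"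

end

theory Submission
  imports Defs
begin

lemma finite_sums_card:
  fixes P :: "real set"
  assumes "finite P"
  shows "finite {sum g F | (g::nat\<Rightarrow>real) F. finite F \<and> card F = k \<and> g ` F \<subseteq> P}"
proof (induction k)
  case 0
  have "{sum g F | (g::nat\<Rightarrow>real) F. finite F \<and> card F = 0 \<and> g ` F \<subseteq> P} \<subseteq> {0}" by auto
  then show ?case using finite_subset by blast
next
  case (Suc k)
  let ?A = "{sum g F | (g::nat\<Rightarrow>real) F. finite F \<and> card F = k \<and> g ` F \<subseteq> P}"
  have "{sum g F | (g::nat\<Rightarrow>real) F. finite F \<and> card F = Suc k \<and> g ` F \<subseteq> P}
        \<subseteq> (\<lambda>(p,s). p+s) ` (P \<times> ?A)"
  proof
    fix y assume "y \<in> {sum g F | (g::nat\<Rightarrow>real) F. finite F \<and> card F = Suc k \<and> g ` F \<subseteq> P}"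
    then obtain g :: "nat \<Rightarrow> real" and F :: "nat set" where y: "y = sum g F" "finite F" "card F = Suc k" "g ` F \<subseteq> P" by blast
    then obtain x F' where F: "F = insert x F'" "x \<notin> F'" "card F' = k"
      using y(3) unfolding card_Suc_eq by blast
    have fin: "finite F'" using F y by auto
    have e: "y = (\<lambda>(p,s). p+s) (g x, sum g F')" using y F fin by simp
    have "g x \<in> P" using y F by auto
    moreover have "sum g F' \<in> ?A" using fin F y by auto
    ultimately have "(g x, sum g F') \<in> P \<times> ?A" by (rule SigmaI)
    then show "y \<in> (\<lambda>(p,s). p+s) ` (P \<times> ?A)" using e by (rule rev_image_eqI)
  qed
  moreover have "finite ((\<lambda>(p,s). p+s) ` (P \<times> ?A))" by (intro finite_imageI finite_cartesian_product assms Suc.IH)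
  ultimately show ?case by (rule finite_subset)
qed

lemma finite_sums_bounded:
  fixes P :: "real set"
  assumes "finite P" "\<And>p. p \<in> P \<Longrightarrow> m \<le> p" "0 < m"
  shows "finite {sum g F | (g::nat\<Rightarrow>real) F. finite F \<and> g ` F \<subseteq> P \<and> sum g F \<le> C}"
proof -
  have "{sum g F | (g::nat\<Rightarrow>real) F. finite F \<and> g ` F \<subseteq> P \<and> sum g F \<le> C}
     \<subseteq> (\<Union>k\<in>{..nat \<lceil>C/m\<rceil>}. {sum g F | (g::nat\<Rightarrow>real) F. finite F \<and> card F = k \<and> g ` F \<subseteq> P})"
  proof
    fix y assume "y \<in> {sum g F | (g::nat\<Rightarrow>real) F. finite F \<and> g ` F \<subseteq> P \<and> sum g F \<le> C}"
    then obtain g :: "nat \<Rightarrow> real" and F :: "nat set" where y: "y = sum g F" "finite F" "g ` F \<subseteq> P" "sum g F \<le> C" by blast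
    have "real (card F) * m \<le> sum g F" using sum_bounded_below[of F m g] y assms(2) by auto
    hence "real (card F) \<le> C/m" using y assms(3) by (simp add: field_simps)
    hence "real (card F) \<le> of_int \<lceil>C/m\<rceil>" using le_of_int_ceiling order_trans by blast
    hence "card F \<le> nat \<lceil>C/m\<rceil>" by linarith
    then show "y \<in> (\<Union>k\<in>{..nat \<lceil>C/m\<rceil>}. {sum g F | (g::nat\<Rightarrow>real) F. finite F \<and> card F = k \<and> g ` F \<subseteq> P})"
      using y by blast
  qed
  then show ?thesis by (rule finite_subset) (auto intro: finite_sums_card assms)
qed

lemma attain:
  fixes \<phi> :: "'a::ab_group_add \<Rightarrow> real"
  assumes h: "height \<phi>" and t: "0 < t" and fin: "finite (\<phi> ` S)"
    and ne: "\<exists>a \<in> fin_seqs S. tau a = \<alpha>"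
  shows "\<exists>a \<in> fin_seqs S. tau a = \<alpha> \<and> inf_rep \<phi> t S \<alpha> = ereal (tnorm t (\<phi>\<circ>a))"
proof -
  define T where "T = {tnorm t (\<phi> \<circ> a) | a. a \<in> fin_seqs S \<and> tau a = \<alpha>}"
  have IR: "inf_rep \<phi> t S \<alpha> = Inf (ereal ` T)" unfolding inf_rep_def T_def
    by (rule arg_cong[where f=Inf]) auto
  from ne obtain a0 where a0: "a0 \<in> fin_seqs S" "tau a0 = \<alpha>" by blast
  define B where "B = tnorm t (\<phi>\<circ>a0)"
  have B: "B \<in> T" using a0 by (auto simp: T_def B_def)
  have finB: "finite {x \<in> T. x \<le> B}"
  proof (cases "t = \<infinity>")
    case True
    have "T \<subseteq> abs ` \<phi> ` S"
    proof
      fix y assume "y \<in> T"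
      then obtain a where a: "a \<in> fin_seqs S" "y = tnorm t (\<phi>\<circ>a)" by (auto simp: T_def)
      have R: "range (\<lambda>n. \<bar>\<phi> (a n)\<bar>) \<subseteq> abs ` \<phi> ` S" using a(1) by (auto simp: fin_seqs_def)
      have f: "finite (range (\<lambda>n. \<bar>\<phi> (a n)\<bar>))" using R fin finite_subset by blast
      have "Sup (range (\<lambda>n. \<bar>\<phi> (a n)\<bar>)) \<in> range (\<lambda>n. \<bar>\<phi> (a n)\<bar>)"
      proof -
        have ne: "range (\<lambda>n. \<bar>\<phi> (a n)\<bar>) \<noteq> {}" by simp
        show ?thesis unfolding cSup_eq_Max[OF f ne] by (rule Max_in[OF f ne])
      qed
      then show "y \<in> abs ` \<phi> ` S" using a R True by (auto simp: tnorm_def)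
    qed
    hence "finite T" using fin finite_subset by blast
    then show ?thesis by simp
  next
    case False
    define p where "p = real_of_ereal t"
    have p: "0 < p" using t False by (cases t) (auto simp: p_def)
    define P where "P = (\<lambda>v. \<bar>v\<bar> powr p) ` (\<phi> ` S - {0})"
    have finP: "finite P" using fin by (simp add: P_def)
    have Ppos: "\<And>q. q \<in> P \<Longrightarrow> 0 < q" by (auto simp: P_def)
    define m where "m = (if P = {} then 1 else Min P)"
    have mpos: "0 < m" using Ppos finP by (auto simp: m_def)
    have mle: "\<And>q. q \<in> P \<Longrightarrow> m \<le> q" using finP by (auto simp: m_def)
    define Sums where "Sums = {sum g F | (g::nat\<Rightarrow>real) F. finite F \<and> g ` F \<subseteq> P \<and> sum g F \<le> B powr p}"
    have finS: "finite Sums" unfolding Sums_def by (rule finite_sums_bounded[OF finP mle mpos])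
    have "{x \<in> T. x \<le> B} \<subseteq> (\<lambda>s. s powr (1/p)) ` Sums"
    proof
      fix y assume "y \<in> {x \<in> T. x \<le> B}"
      then obtain a where a: "a \<in> fin_seqs S" "tau a = \<alpha>" "y = tnorm t (\<phi>\<circ>a)" "y \<le> B"
        by (auto simp: T_def)
      define F where "F = {n. (\<phi>\<circ>a) n \<noteq> 0}"
      define g where "g = (\<lambda>n. \<bar>(\<phi>\<circ>a) n\<bar> powr p)"
      have "F \<subseteq> {n. a n \<noteq> 0}" using h by (auto simp: F_def height_def)
      hence finF: "finite F" using a(1) finite_subset by (auto simp: fin_seqs_def)
      have y: "y = sum g F powr (1/p)" using a False by (simp add: tnorm_def F_def g_def p_def)
      have gP: "g ` F \<subseteq> P" using a(1) by (auto simp: g_def F_def P_def fin_seqs_def)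
      have s0: "0 \<le> sum g F" by (simp add: g_def sum_nonneg)
      have y0: "0 \<le> y" using y by simp
      have "sum g F = y powr p" using y s0 p by (simp add: powr_powr)
      also have "\<dots> \<le> B powr p" using a(4) y0 p by (simp add: powr_mono2)
      finally have "sum g F \<in> Sums" using finF gP by (auto simp: Sums_def)
      then show "y \<in> (\<lambda>s. s powr (1/p)) ` Sums" using y by blast
    qed
    then show ?thesis using finS finite_subset by blast
  qed
  define x0 where "x0 = Min {x \<in> T. x \<le> B}"
  have x0T: "x0 \<in> {x \<in> T. x \<le> B}" unfolding x0_def using finB B by (intro Min_in) auto
  have low: "x0 \<le> y" if yT: "y \<in> T" for y
  proof (cases "y \<le> B")
    case True then show ?thesis using finB yT by (auto simp: x0_def)
  next
    case False then show ?thesis using x0T by auto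
  qed
  have "Inf (ereal ` T) = ereal x0"
  proof (rule antisym)
    show "Inf (ereal ` T) \<le> ereal x0" using x0T by (auto intro: Inf_lower)
    show "ereal x0 \<le> Inf (ereal ` T)" using low by (auto intro!: Inf_greatest)
  qed
  then have I0: "inf_rep \<phi> t S \<alpha> = ereal x0" using IR by simp
  obtain a where A: "a \<in> fin_seqs S" "tau a = \<alpha>" "x0 = tnorm t (\<phi>\<circ>a)"
    using x0T unfolding T_def by blast
  have "tau a = \<alpha> \<and> inf_rep \<phi> t S \<alpha> = ereal (tnorm t (\<phi>\<circ>a))" using A(2,3) I0 by simp
  then show ?thesis using A(1) by blast
qed

theorem theorem2p1:
  fixes \<phi> :: "'a::ab_group_add \<Rightarrow> real" and \<alpha> :: 'a and t :: ereal
  assumes "height \<phi>" and "0 < t"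
  shows "((\<exists>a \<in> fin_seqs UNIV. tau a = \<alpha> \<and> phi_t \<phi> t \<alpha> = ereal (tnorm t (\<phi> \<circ> a)))
            \<longleftrightarrow> (\<exists>R. finite R \<and> replaces \<phi> t \<alpha> R))
       \<and> ((\<exists>R. finite R \<and> replaces \<phi> t \<alpha> R)
            \<longleftrightarrow> (\<exists>S. finite (\<phi> ` S) \<and> replaces \<phi> t \<alpha> S))"
proof -
  have sub: "fin_seqs A \<subseteq> fin_seqs UNIV" for A :: "'a set" by (auto simp: fin_seqs_def)
  have s1: "\<exists>R. finite R \<and> replaces \<phi> t \<alpha> R"
    if "\<exists>a \<in> fin_seqs UNIV. tau a = \<alpha> \<and> phi_t \<phi> t \<alpha> = ereal (tnorm t (\<phi> \<circ> a))"
  proof -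
    from that obtain a where a: "a \<in> fin_seqs UNIV" "tau a = \<alpha>"
      "phi_t \<phi> t \<alpha> = ereal (tnorm t (\<phi> \<circ> a))" by blast
    define R where "R = insert 0 (range a)"
    have "R \<subseteq> insert 0 (a ` {n. a n \<noteq> 0})" by (auto simp: R_def)
    hence finR: "finite R" using a(1) finite_subset by (auto simp: fin_seqs_def)
    have aR: "a \<in> fin_seqs R" using a(1) by (auto simp: fin_seqs_def R_def)
    have "inf_rep \<phi> t R \<alpha> \<le> ereal (tnorm t (\<phi> \<circ> a))"
      unfolding inf_rep_def using aR a(2) by (auto intro!: Inf_lower)
    moreover have "phi_t \<phi> t \<alpha> \<le> inf_rep \<phi> t R \<alpha>"
      unfolding phi_t_def inf_rep_def using sub[of R] by (intro Inf_superset_mono) auto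
    ultimately have "phi_t \<phi> t \<alpha> = inf_rep \<phi> t R \<alpha>" using a(3) by simp
    then show ?thesis using finR by (auto simp: replaces_def R_def)
  qed
  have s2: "\<exists>S. finite (\<phi> ` S) \<and> replaces \<phi> t \<alpha> S"
    if "\<exists>R. finite R \<and> replaces \<phi> t \<alpha> R" using that finite_imageI by metis
  have s3: "\<exists>a \<in> fin_seqs UNIV. tau a = \<alpha> \<and> phi_t \<phi> t \<alpha> = ereal (tnorm t (\<phi> \<circ> a))"
    if "\<exists>S. finite (\<phi> ` S) \<and> replaces \<phi> t \<alpha> S"
  proof -
    from that obtain S where S: "finite (\<phi> ` S)" "phi_t \<phi> t \<alpha> = inf_rep \<phi> t S \<alpha>"
      by (auto simp: replaces_def)
    define a0 where "a0 = (\<lambda>n::nat. if n = 0 then \<alpha> else 0)"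
    have "{n. a0 n \<noteq> 0} \<subseteq> {0}" by (auto simp: a0_def)
    hence "finite {n. a0 n \<noteq> 0}" by (rule finite_subset) simp
    hence a0f: "a0 \<in> fin_seqs UNIV" by (simp add: fin_seqs_def)
    have a0t: "tau a0 = \<alpha>"
    proof (cases "\<alpha> = 0")
      case True
      then have "{n. a0 n \<noteq> 0} = {}" by (auto simp: a0_def)
      then show ?thesis using True by (simp add: tau_def)
    next
      case False
      then have "{n. a0 n \<noteq> 0} = {0}" by (auto simp: a0_def)
      then show ?thesis by (simp add: tau_def a0_def)
    qed
    have "phi_t \<phi> t \<alpha> \<le> ereal (tnorm t (\<phi> \<circ> a0))"
      unfolding phi_t_def inf_rep_def using a0f a0t by (auto intro!: Inf_lower)
    hence fin: "phi_t \<phi> t \<alpha> \<noteq> \<infinity>" by auto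
    have ne: "\<exists>a \<in> fin_seqs S. tau a = \<alpha>"
    proof (rule ccontr)
      assume "\<not> ?thesis"
      hence E: "{ereal (tnorm t (\<phi> \<circ> a)) | a. a \<in> fin_seqs S \<and> tau a = \<alpha>} = {}" by auto
      have "inf_rep \<phi> t S \<alpha> = Inf {}" unfolding inf_rep_def E ..
      hence "inf_rep \<phi> t S \<alpha> = \<infinity>" by (simp add: top_ereal_def)
      then show False using fin S(2) by simp
    qed
    from attain[OF assms S(1) ne] obtain a where
      "a \<in> fin_seqs S" "tau a = \<alpha>" "inf_rep \<phi> t S \<alpha> = ereal (tnorm t (\<phi>\<circ>a))" by blast
    then show ?thesis using sub[of S] S(2) by auto
  qed
  show ?thesis using s1 s2 s3 by blast
qed

end
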